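(* Let $X$ be a compact sub-Stonean space, and regard $C(X)$ as a Hilbert $C(X)$-bimodule with left and right actions given by multiplication. A subset $\mathscr{S}$ of $C(X)$ is $C(X)$-convex if and only if $\mathscr{S}$ is pseudo $C(X)$-convex.
   Context: $C(X)$ is the $C^*$-algebra of complex-valued continuous functions on $X$. A subset $\mathscr{S}\subseteq C(X)$ is $C(X)$-convex if for every $n\in\mathbb{N}$, all $f_1,\dots,f_n\in\mathscr{S}$ and all $t_1,\dots,t_n\in C(X)$ with $\sum_{i=1}^n |t_i|^2 = 1$, the function $\sum_{i=1}^n \overline{t_i}f_it_i$ lies in $\mathscr{S}$; it is pseudo $C(X)$-convex if this holds for $n=2$, i.e. for all $f_1,f_2\in\mathscr{S}$ and $t_1,t_2\in C(X)$ with $|t_1|^2+|t_2|^2=1$, $\overline{t_1}f_1t_1+\overline{t_2}f_2t_2\in\mathscr{S}$. A compact Hausdorff space $X$ is sub-Stonean (in the sense of Grove and Pedersen) if any two disjoint open $\sigma$-compact subsets of $X$ have disjoint closures. *)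

theory Defs
  imports "HOL-Analysis.Analysis"
begin

text \<open>C(X) for X the (compact Hausdorff) space given by the type 'a.\<close>
definition CX :: "('a::topological_space \<Rightarrow> complex) set" where
  "CX = {f. continuous_on UNIV f}"

definition C_convex :: "('a::topological_space \<Rightarrow> complex) set \<Rightarrow> bool" where
  "C_convex S \<longleftrightarrow>
     (\<forall>(n::nat) (f::nat \<Rightarrow> 'a \<Rightarrow> complex) (t::nat \<Rightarrow> 'a \<Rightarrow> complex).
        (\<forall>i<n. f i \<in> S) \<and> (\<forall>i<n. t i \<in> CX) \<and>
        (\<forall>x. (\<Sum>i<n. (cmod (t i x))\<^sup>2) = 1)
        \<longrightarrow> (\<lambda>x. \<Sum>i<n. cnj (t i x) * f i x * t i x) \<in> S)"

definition pseudo_C_convex :: "('a::topological_space \<Rightarrow> complex) set \<Rightarrow> bool" where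
  "pseudo_C_convex S \<longleftrightarrow>
     (\<forall>f1 f2 t1 t2. f1 \<in> S \<and> f2 \<in> S \<and> t1 \<in> CX \<and> t2 \<in> CX \<and>
        (\<forall>x. (cmod (t1 x))\<^sup>2 + (cmod (t2 x))\<^sup>2 = 1)
        \<longrightarrow> (\<lambda>x. cnj (t1 x) * f1 x * t1 x + cnj (t2 x) * f2 x * t2 x) \<in> S)"

definition sigma_compact :: "'a::topological_space set \<Rightarrow> bool" where
  "sigma_compact U \<longleftrightarrow> (\<exists>K::nat \<Rightarrow> 'a set. (\<forall>n. compact (K n)) \<and> U = (\<Union>n. K n))"

text \<open>Sub-Stonean (Grove--Pedersen): compact Hausdorff (Hausdorff via the class t2_space)
  and disjoint open sigma-compact sets have disjoint closures.\<close>
definition sub_Stonean :: "'a::t2_space itself \<Rightarrow> bool" where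
  "sub_Stonean _ \<longleftrightarrow> compact (UNIV::'a set) \<and>
     (\<forall>U V::'a set. open U \<and> open V \<and> sigma_compact U \<and> sigma_compact V \<and> U \<inter> V = {}
        \<longrightarrow> closure U \<inter> closure V = {})"

end

theory Submission imports Defs begin

lemma haus_t2: "Hausdorff_space (euclidean :: 'a::t2_space topology)"
  unfolding Hausdorff_space_def disjnt_def using separation_t2 by (metis UNIV_I topspace_euclidean open_openin)

lemma os_set:
  fixes s g h :: "'a::t2_space \<Rightarrow> real"
  assumes cU: "compact (UNIV::'a set)" and cs: "continuous_on UNIV s"
    and cg: "continuous_on UNIV g" and ch: "continuous_on UNIV h"
  shows "open {y. 0 < s y \<and> g y < h y}" "sigma_compact {y. 0 < s y \<and> g y < h y}"
proof -
  have "open {y. (\<lambda>_. 0) y < s y}" by (rule open_Collect_less[OF continuous_on_const cs])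
  moreover have "open {y. g y < h y}" by (rule open_Collect_less[OF cg ch])
  ultimately show "open {y. 0 < s y \<and> g y < h y}" by (simp add: Collect_conj_eq open_Int)
  define K where "K = (\<lambda>n::nat. {y. (\<lambda>_. inverse (real (Suc n))) y \<le> s y} \<inter> {y. (\<lambda>y. g y + inverse (real (Suc n))) y \<le> h y})"
  have "compact (K n)" for n
  proof -
    have c1: "continuous_on UNIV (\<lambda>y. g y + inverse (real (Suc n)))"
      by (rule continuous_on_add[OF cg continuous_on_const])
    have "closed (K n)" unfolding K_def
      by (rule closed_Int[OF closed_Collect_le[OF continuous_on_const cs] closed_Collect_le[OF c1 ch]])
    then show ?thesis using compact_Int_closed[OF cU] by (metis inf_top.left_neutral)
  qed
  moreover have "{y. 0 < s y \<and> g y < h y} = (\<Union>n. K n)"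
  proof (rule set_eqI, rule iffI)
    fix y assume "y \<in> {y. 0 < s y \<and> g y < h y}"
    then have "0 < min (s y) (h y - g y)" by auto
    from reals_Archimedean[OF this] obtain n where "inverse (real (Suc n)) < min (s y) (h y - g y)" by auto
    then have "y \<in> K n" unfolding K_def by auto
    then show "y \<in> (\<Union>n. K n)" by blast
  next
    fix y assume "y \<in> (\<Union>n. K n)"
    then obtain n where "y \<in> K n" by blast
    then have a: "inverse (real (Suc n)) \<le> s y" "g y + inverse (real (Suc n)) \<le> h y"
      unfolding K_def by auto
    have pos: "0 < inverse (real (Suc n))" by simp
    have "0 < s y" "g y < h y" using a pos by linarith+
    then show "y \<in> {y. 0 < s y \<and> g y < h y}" by simp
  qed
  ultimately show "sigma_compact {y. 0 < s y \<and> g y < h y}" unfolding sigma_compact_def by blast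
qed

lemma sep_lemma:
  fixes s p :: "'a::t2_space \<Rightarrow> real"
  assumes sub: "sub_Stonean TYPE('a)" and cs: "continuous_on UNIV s" and cp: "continuous_on UNIV p"
    and le: "\<alpha> \<le> \<beta>"
  shows "closure {y. 0 < s y \<and> p y < \<alpha> * s y} \<inter> closure {y. 0 < s y \<and> \<beta> * s y < p y} = {}"
proof -
  have cU: "compact (UNIV::'a set)" using sub unfolding sub_Stonean_def by blast
  have c1: "continuous_on UNIV (\<lambda>y. \<alpha> * s y)" by (rule continuous_on_mult[OF continuous_on_const cs])
  have c2: "continuous_on UNIV (\<lambda>y. \<beta> * s y)" by (rule continuous_on_mult[OF continuous_on_const cs])
  note A = os_set[OF cU cs cp c1]
  note B = os_set[OF cU cs c2 cp]
  have "{y. 0 < s y \<and> p y < \<alpha> * s y} \<inter> {y. 0 < s y \<and> \<beta> * s y < p y} = {}"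
  proof (rule ccontr)
    assume "\<not> ?thesis"
    then obtain y where y: "0 < s y" "p y < \<alpha> * s y" "\<beta> * s y < p y" by blast
    have "\<alpha> * s y \<le> \<beta> * s y" using le y(1) by (simp add: mult_right_mono)
    then show False using y by linarith
  qed
  then show ?thesis using sub A B unfolding sub_Stonean_def by blast
qed

lemma half1: "(e::real) < r \<Longrightarrow> 0 < (r - e)/2 \<and> e + (r - e)/2 < r" by (auto simp: field_simps)
lemma half2: "(r::real) < e \<Longrightarrow> 0 < (e - r)/2 \<and> r < e - (e - r)/2" by (auto simp: field_simps)

lemma division:
  fixes p q :: "'a::t2_space \<Rightarrow> real"
  assumes sub: "sub_Stonean TYPE('a)" and cp: "continuous_on UNIV p" and cq: "continuous_on UNIV q"
    and p0: "\<And>x. 0 \<le> p x" and q0: "\<And>x. 0 \<le> q x"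
  shows "\<exists>a. continuous_on UNIV a \<and> (\<forall>x. 0 \<le> a x \<and> a x \<le> 1) \<and> (\<forall>x. a x * (p x + q x) = p x)"
proof -
  define s where "s = (\<lambda>x. p x + q x)"
  have cs: "continuous_on UNIV s" unfolding s_def by (rule continuous_on_add[OF cp cq])
  define A where "A = (\<lambda>c. {y. 0 < s y \<and> p y < c * s y})"
  define B where "B = (\<lambda>c. {y. 0 < s y \<and> c * s y < p y})"
  define U where "U = {y. 0 < s y}"
  define T where "T = closure U"
  have sep: "\<And>\<alpha> \<beta>. \<alpha> \<le> \<beta> \<Longrightarrow> closure (A \<alpha>) \<inter> closure (B \<beta>) = {}"
    unfolding A_def B_def by (rule sep_lemma[OF sub cs cp])
  have cover: "closure U \<subseteq> closure (B a) \<union> closure (A b)" if ab: "a < b" for a b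
  proof -
    have "U \<subseteq> B a \<union> A b"
    proof
      fix y assume "y \<in> U"
      then have y: "0 < s y" unfolding U_def by simp
      show "y \<in> B a \<union> A b"
      proof (cases "a * s y < p y")
        case True then show ?thesis using y unfolding B_def by simp
      next
        case False
        have "a * s y < b * s y" using ab y by simp
        then have "p y < b * s y" using False by linarith
        then show ?thesis using y unfolding A_def by simp
      qed
    qed
    then show ?thesis by (metis closure_Un closure_mono)
  qed
  define P where "P = (\<lambda>x c. \<forall>\<epsilon>>0. x \<notin> closure (B (c+\<epsilon>)) \<and> x \<notin> closure (A (c-\<epsilon>)))"
  have ex: "\<exists>c. 0 \<le> c \<and> c \<le> 1 \<and> P x c" if xT: "x \<in> T" for x
  proof -
    define C where "C = (\<lambda>\<beta>. {y. 0 < s y \<and> \<beta> * s y \<le> p y})"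
    define L where "L = {\<beta>. x \<in> closure (C \<beta>)}"
    have "C 0 = U" unfolding C_def U_def using p0 by auto
    then have L0: "0 \<in> L" unfolding L_def using xT T_def by simp
    have L1: "\<beta> \<le> 1" if "\<beta> \<in> L" for \<beta>
    proof (rule ccontr)
      assume nb: "\<not> \<beta> \<le> 1"
      have "C \<beta> = {}"
      proof (rule ccontr)
        assume "C \<beta> \<noteq> {}"
        then obtain y where y: "0 < s y" "\<beta> * s y \<le> p y" unfolding C_def by auto
        have "p y \<le> s y" unfolding s_def using q0 by simp
        moreover have "s y < \<beta> * s y" using nb y(1) by simp
        ultimately show False using y by linarith
      qed
      then show False using that unfolding L_def by simp
    qed
    have bdd: "bdd_above L" using L1 by (rule bdd_aboveI)
    define c where "c = Sup L"
    have c0: "0 \<le> c" unfolding c_def using cSup_upper[OF L0 bdd] .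
    have c1: "c \<le> 1" unfolding c_def using L0 L1 by (intro cSup_least) auto
    have "P x c" unfolding P_def
    proof (intro allI impI conjI)
      fix \<epsilon> :: real assume ep: "0 < \<epsilon>"
      show "x \<notin> closure (B (c+\<epsilon>))"
      proof
        assume "x \<in> closure (B (c+\<epsilon>))"
        moreover have "B (c+\<epsilon>) \<subseteq> C (c+\<epsilon>)" unfolding B_def C_def by auto
        ultimately have "c+\<epsilon> \<in> L" unfolding L_def using closure_mono by blast
        then have "c + \<epsilon> \<le> c" unfolding c_def using bdd by (rule cSup_upper)
        then show False using ep by simp
      qed
      show "x \<notin> closure (A (c-\<epsilon>))"
      proof
        assume xa: "x \<in> closure (A (c-\<epsilon>))"
        have "c - \<epsilon>/2 < Sup L" using ep unfolding c_def by simp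
        then obtain \<beta> where \<beta>: "\<beta> \<in> L" "c - \<epsilon>/2 < \<beta>" using L0 less_cSupD by blast
        have "C \<beta> \<subseteq> B (c - \<epsilon>/2)"
        proof
          fix y assume "y \<in> C \<beta>"
          then have y: "0 < s y" "\<beta> * s y \<le> p y" unfolding C_def by auto
          have "(c - \<epsilon>/2) * s y < \<beta> * s y" using \<beta>(2) y(1) by simp
          then have "(c - \<epsilon>/2) * s y < p y" using y(2) by linarith
          then show "y \<in> B (c - \<epsilon>/2)" using y unfolding B_def by simp
        qed
        then have "x \<in> closure (B (c - \<epsilon>/2))" using \<beta>(1) closure_mono unfolding L_def by blast
        moreover have "closure (A (c-\<epsilon>)) \<inter> closure (B (c - \<epsilon>/2)) = {}" using ep by (intro sep) simp
        ultimately show False using xa by blast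
      qed
    qed
    then show ?thesis using c0 c1 by blast
  qed
  define e where "e = (\<lambda>x. SOME c. 0 \<le> c \<and> c \<le> 1 \<and> P x c)"
  have eP: "0 \<le> e x \<and> e x \<le> 1 \<and> P x (e x)" if "x \<in> T" for x
    unfolding e_def using someI_ex[OF ex[OF that]] .
  have close: "\<bar>e y - e x\<bar> \<le> 2*\<epsilon>" if x: "x \<in> T" and y: "y \<in> T" and ep: "0 < \<epsilon>"
     and ny1: "y \<notin> closure (B (e x + \<epsilon>))" and ny2: "y \<notin> closure (A (e x - \<epsilon>))" for x y \<epsilon>
  proof -
    have Py: "P y (e y)" using eP[OF y] by blast
    have "e y \<le> e x + 2*\<epsilon>"
    proof (rule ccontr)
      assume "\<not> ?thesis"
      then have "e x + \<epsilon> < e y - \<epsilon>" by simp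
      from cover[OF this] y have "y \<in> closure (B (e x + \<epsilon>)) \<union> closure (A (e y - \<epsilon>))"
        unfolding T_def by blast
      then show False using ny1 Py ep unfolding P_def by blast
    qed
    moreover have "e x - 2*\<epsilon> \<le> e y"
    proof (rule ccontr)
      assume "\<not> ?thesis"
      then have "e y + \<epsilon> < e x - \<epsilon>" by simp
      from cover[OF this] y have "y \<in> closure (B (e y + \<epsilon>)) \<union> closure (A (e x - \<epsilon>))"
        unfolding T_def by blast
      then show False using ny2 Py ep unfolding P_def by blast
    qed
    ultimately show ?thesis by simp
  qed
  have conte: "continuous_on T e"
    unfolding continuous_on_topological
  proof (intro ballI allI impI)
    fix x V assume x: "x \<in> T" and V: "open V" "e x \<in> V"
    obtain r where r: "r > 0" "ball (e x) r \<subseteq> V" using V open_contains_ball by blast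
    define \<epsilon> where "\<epsilon> = r/4"
    have ep: "0 < \<epsilon>" using r unfolding \<epsilon>_def by simp
    define N where "N = - closure (B (e x + \<epsilon>)) \<inter> - closure (A (e x - \<epsilon>))"
    have "open N" unfolding N_def by (intro open_Int open_Compl closed_closure)
    moreover have "x \<in> N" using eP[OF x] ep unfolding N_def P_def by simp
    moreover have "\<forall>y\<in>T. y \<in> N \<longrightarrow> e y \<in> V"
    proof (intro ballI impI)
      fix y assume y: "y \<in> T" "y \<in> N"
      have "\<bar>e y - e x\<bar> \<le> 2*\<epsilon>" using close[OF x y(1) ep] y(2) unfolding N_def by simp
      then have "e y \<in> ball (e x) r" unfolding \<epsilon>_def using r by (simp add: dist_real_def abs_minus_commute)
      then show "e y \<in> V" using r by blast
    qed
    ultimately show "\<exists>A. open A \<and> x \<in> A \<and> (\<forall>y\<in>T. y \<in> A \<longrightarrow> e y \<in> V)" by blast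
  qed
  have eU: "e x * s x = p x" if "x \<in> U" for x
  proof -
    have xT: "x \<in> T" using that closure_subset unfolding T_def by blast
    have s0: "0 < s x" using that U_def by simp
    have Px: "P x (e x)" using eP[OF xT] by blast
    have "p x \<le> e x * s x"
    proof (rule ccontr)
      assume na: "\<not> ?thesis"
      define \<epsilon> where "\<epsilon> = (p x / s x - e x)/2"
      have "e x < p x / s x" using s0 na by (simp add: pos_less_divide_eq)
      then have ep: "0 < \<epsilon>" and lt: "e x + \<epsilon> < p x / s x" unfolding \<epsilon>_def using half1 by blast+
      have "(e x + \<epsilon>) * s x < p x" using lt s0 by (simp add: pos_less_divide_eq)
      then have "x \<in> B (e x + \<epsilon>)" unfolding B_def using s0 by simp
      then show False using Px ep closure_subset unfolding P_def by blast
    qed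
    moreover have "e x * s x \<le> p x"
    proof (rule ccontr)
      assume na: "\<not> ?thesis"
      define \<epsilon> where "\<epsilon> = (e x - p x / s x)/2"
      have "p x / s x < e x" using s0 na by (simp add: pos_divide_less_eq)
      then have ep: "0 < \<epsilon>" and lt: "p x / s x < e x - \<epsilon>" unfolding \<epsilon>_def using half2 by blast+
      have "p x < (e x - \<epsilon>) * s x" using lt s0 by (simp add: pos_divide_less_eq)
      then have "x \<in> A (e x - \<epsilon>)" unfolding A_def using s0 by simp
      then show False using Px ep closure_subset unfolding P_def by blast
    qed
    ultimately show ?thesis by simp
  qed
  have cU: "compact (UNIV::'a set)" using sub unfolding sub_Stonean_def by blast
  have ns: "normal_space (euclidean :: 'a topology)"
    by (rule compact_Hausdorff_or_regular_imp_normal_space) (use cU haus_t2 in \<open>auto simp: compact_space_def\<close>)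
  have cl: "closedin euclidean T" unfolding T_def using closed_closedin closed_closure by blast
  have cm: "continuous_map (subtopology euclidean T) euclideanreal e" using conte by simp
  have im: "e ` T \<subseteq> {0..1}" using eP by auto
  obtain g where g: "continuous_map euclidean euclideanreal g" "\<And>x. x \<in> T \<Longrightarrow> g x = e x"
      "g ` topspace euclidean \<subseteq> {0..1}"
    using Tietze_extension_closed_real_interval[OF ns cl cm im] by auto
  show ?thesis
  proof (intro exI conjI allI)
    show "continuous_on UNIV g" using g(1) by simp
    fix x
    have gx: "g x \<in> {0..1}" using g(3) by (simp add: image_subset_iff)
    then show "0 \<le> g x" "g x \<le> 1" by auto
    show "g x * (p x + q x) = p x"
    proof (cases "0 < s x")
      case True
      then have xU: "x \<in> U" unfolding U_def by simp
      then have "x \<in> T" using closure_subset unfolding T_def by blast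
      then show ?thesis using g(2) eU[OF xU] unfolding s_def by simp
    next
      case False
      then have "p x = 0" "q x = 0" using p0[of x] q0[of x] unfolding s_def by linarith+
      then show ?thesis by simp
    qed
  qed
qed

lemma cnj_mult_sq: "cnj z * f * z = complex_of_real ((cmod z)\<^sup>2) * f"
proof -
  have "cnj z * f * z = (z * cnj z) * f" by (simp add: algebra_simps)
  then show ?thesis by (simp only: complex_norm_square)
qed

lemma pseudo_comb:
  fixes S :: "('a::t2_space \<Rightarrow> complex) set"
  assumes ps: "pseudo_C_convex S" and f1: "f1 \<in> S" and f2: "f2 \<in> S"
    and ca: "continuous_on UNIV a" and a01: "\<forall>x. 0 \<le> a x \<and> a x \<le> 1"
  shows "(\<lambda>x. complex_of_real (a x) * f1 x + complex_of_real (1 - a x) * f2 x) \<in> S"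
proof -
  define t1 where "t1 = (\<lambda>x. complex_of_real (sqrt (a x)))"
  define t2 where "t2 = (\<lambda>x. complex_of_real (sqrt (1 - a x)))"
  have "t1 \<in> CX" unfolding CX_def t1_def by (simp, intro continuous_intros ca)
  moreover have "t2 \<in> CX" unfolding CX_def t2_def by (simp, intro continuous_intros ca)
  moreover have "\<forall>x. (cmod (t1 x))\<^sup>2 + (cmod (t2 x))\<^sup>2 = 1"
    using a01 unfolding t1_def t2_def by simp
  ultimately have "(\<lambda>x. cnj (t1 x) * f1 x * t1 x + cnj (t2 x) * f2 x * t2 x) \<in> S"
    using ps f1 f2 unfolding pseudo_C_convex_def by blast
  moreover have "(\<lambda>x. cnj (t1 x) * f1 x * t1 x + cnj (t2 x) * f2 x * t2 x) =
      (\<lambda>x. complex_of_real (a x) * f1 x + complex_of_real (1 - a x) * f2 x)"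
    using a01 unfolding cnj_mult_sq t1_def t2_def by simp
  ultimately show ?thesis by simp
qed

lemma weights:
  fixes S :: "('a::t2_space \<Rightarrow> complex) set"
  assumes ps: "pseudo_C_convex S" and sub: "sub_Stonean TYPE('a)"
  shows "\<forall>f w. (\<forall>i<Suc m. f i \<in> S) \<and> (\<forall>i<Suc m. continuous_on UNIV (w i)) \<and>
     (\<forall>i<Suc m. \<forall>x. 0 \<le> w i x) \<and> (\<forall>x. (\<Sum>i<Suc m. w i x) = 1) \<longrightarrow>
     (\<lambda>x. \<Sum>i<Suc m. complex_of_real (w i x) * f i x) \<in> S"
proof (induction m)
  case 0
  show ?case
  proof (intro allI impI)
    fix f :: "nat \<Rightarrow> 'a \<Rightarrow> complex" and w :: "nat \<Rightarrow> 'a \<Rightarrow> real"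
    assume H: "(\<forall>i<Suc 0. f i \<in> S) \<and> (\<forall>i<Suc 0. continuous_on UNIV (w i)) \<and>
     (\<forall>i<Suc 0. \<forall>x. 0 \<le> w i x) \<and> (\<forall>x. (\<Sum>i<Suc 0. w i x) = 1)"
    then have "(\<lambda>x. \<Sum>i<Suc 0. complex_of_real (w i x) * f i x) = f 0" by (simp add: fun_eq_iff)
    then show "(\<lambda>x. \<Sum>i<Suc 0. complex_of_real (w i x) * f i x) \<in> S" using H by simp
  qed
next
  case (Suc m)
  show ?case
  proof (intro allI impI)
    fix f :: "nat \<Rightarrow> 'a \<Rightarrow> complex" and w :: "nat \<Rightarrow> 'a \<Rightarrow> real"
    assume H: "(\<forall>i<Suc (Suc m). f i \<in> S) \<and> (\<forall>i<Suc (Suc m). continuous_on UNIV (w i)) \<and>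
     (\<forall>i<Suc (Suc m). \<forall>x. 0 \<le> w i x) \<and> (\<forall>x. (\<Sum>i<Suc (Suc m). w i x) = 1)"
    have cp: "continuous_on UNIV (w m)" and cq: "continuous_on UNIV (w (Suc m))" using H by auto
    have p0: "\<And>x. 0 \<le> w m x" and q0: "\<And>x. 0 \<le> w (Suc m) x" using H by auto
    obtain a where a: "continuous_on UNIV a" "\<forall>x. 0 \<le> a x \<and> a x \<le> 1"
        "\<forall>x. a x * (w m x + w (Suc m) x) = w m x"
      using division[OF sub cp cq p0 q0] by blast
    define h where "h = (\<lambda>x. complex_of_real (a x) * f m x + complex_of_real (1 - a x) * f (Suc m) x)"
    have hS: "h \<in> S" unfolding h_def by (rule pseudo_comb[OF ps _ _ a(1,2)]) (use H in auto)
    define f' where "f' = (\<lambda>i. if i < m then f i else h)"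
    define w' where "w' = (\<lambda>i. if i < m then w i else (\<lambda>x. w m x + w (Suc m) x))"
    have sw: "(\<Sum>i<m. g' i) = (\<Sum>i<m. g i)" if "\<And>i. i < m \<Longrightarrow> g' i = g i" for g g' :: "nat \<Rightarrow> 'b::comm_monoid_add"
      using that by (intro sum.cong) auto
    have "(\<forall>i<Suc m. f' i \<in> S) \<and> (\<forall>i<Suc m. continuous_on UNIV (w' i)) \<and>
     (\<forall>i<Suc m. \<forall>x. 0 \<le> w' i x) \<and> (\<forall>x. (\<Sum>i<Suc m. w' i x) = 1)"
    proof (intro conjI allI impI)
      fix i assume "i < Suc m"
      then show "f' i \<in> S" using H hS unfolding f'_def by auto
    next
      fix i assume "i < Suc m"
      then show "continuous_on UNIV (w' i)" using H cp cq unfolding w'_def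
        by (auto intro: continuous_on_add)
    next
      fix i x assume "i < Suc m"
      then show "0 \<le> w' i x" using H p0[of x] q0[of x] unfolding w'_def by auto
    next
      fix x
      have "(\<Sum>i<Suc m. w' i x) = (\<Sum>i<m. w i x) + (w m x + w (Suc m) x)"
        using sw[of "\<lambda>i. w' i x" "\<lambda>i. w i x"] unfolding w'_def by simp
      also have "\<dots> = (\<Sum>i<Suc (Suc m). w i x)" by simp
      finally show "(\<Sum>i<Suc m. w' i x) = 1" using H by simp
    qed
    then have IH: "(\<lambda>x. \<Sum>i<Suc m. complex_of_real (w' i x) * f' i x) \<in> S" using Suc by blast
    have "(\<lambda>x. \<Sum>i<Suc m. complex_of_real (w' i x) * f' i x) =
          (\<lambda>x. \<Sum>i<Suc (Suc m). complex_of_real (w i x) * f i x)"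
    proof
      fix x
      have e1: "(\<Sum>i<Suc m. complex_of_real (w' i x) * f' i x) =
          (\<Sum>i<m. complex_of_real (w i x) * f i x) + complex_of_real (w m x + w (Suc m) x) * h x"
        using sw[of "\<lambda>i. complex_of_real (w' i x) * f' i x" "\<lambda>i. complex_of_real (w i x) * f i x"]
        unfolding w'_def f'_def by simp
      have ax: "a x * (w m x + w (Suc m) x) = w m x" using a(3) by blast
      have bx: "(1 - a x) * (w m x + w (Suc m) x) = w (Suc m) x" using ax by (simp add: algebra_simps)
      have "complex_of_real (w m x + w (Suc m) x) * h x =
          complex_of_real (a x * (w m x + w (Suc m) x)) * f m x +
          complex_of_real ((1 - a x) * (w m x + w (Suc m) x)) * f (Suc m) x"
        unfolding h_def of_real_mult by (simp add: algebra_simps)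
      also have "\<dots> = complex_of_real (w m x) * f m x + complex_of_real (w (Suc m) x) * f (Suc m) x"
        using ax bx by simp
      finally show "(\<Sum>i<Suc m. complex_of_real (w' i x) * f' i x) =
          (\<Sum>i<Suc (Suc m). complex_of_real (w i x) * f i x)"
        using e1 by (simp add: add.assoc)
    qed
    then show "(\<lambda>x. \<Sum>i<Suc (Suc m). complex_of_real (w i x) * f i x) \<in> S" using IH by simp
  qed
qed

theorem theorem3p19:
  fixes S :: "('a::t2_space \<Rightarrow> complex) set"
  assumes "sub_Stonean TYPE('a)"
    and "S \<subseteq> CX"
  shows "C_convex S \<longleftrightarrow> pseudo_C_convex S"
proof
  assume C: "C_convex S"
  show "pseudo_C_convex S" unfolding pseudo_C_convex_def
  proof (intro allI impI)
    fix f1 f2 t1 t2 :: "'a \<Rightarrow> complex"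
    assume H: "f1 \<in> S \<and> f2 \<in> S \<and> t1 \<in> CX \<and> t2 \<in> CX \<and> (\<forall>x. (cmod (t1 x))\<^sup>2 + (cmod (t2 x))\<^sup>2 = 1)"
    define f where "f = (\<lambda>i::nat. if i = 0 then f1 else f2)"
    define t where "t = (\<lambda>i::nat. if i = 0 then t1 else t2)"
    have "(\<forall>i<2. f i \<in> S) \<and> (\<forall>i<2. t i \<in> CX) \<and> (\<forall>x. (\<Sum>i<2. (cmod (t i x))\<^sup>2) = 1)"
      using H unfolding f_def t_def by (simp add: numeral_2_eq_2 less_Suc_eq)
    then have "(\<lambda>x. \<Sum>i<2. cnj (t i x) * f i x * t i x) \<in> S"
      using C unfolding C_convex_def by blast
    then show "(\<lambda>x. cnj (t1 x) * f1 x * t1 x + cnj (t2 x) * f2 x * t2 x) \<in> S"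
      unfolding f_def t_def by (simp add: numeral_2_eq_2)
  qed
next
  assume ps: "pseudo_C_convex S"
  show "C_convex S" unfolding C_convex_def
  proof (intro allI impI)
    fix n and f t :: "nat \<Rightarrow> 'a \<Rightarrow> complex"
    assume H: "(\<forall>i<n. f i \<in> S) \<and> (\<forall>i<n. t i \<in> CX) \<and> (\<forall>x. (\<Sum>i<n. (cmod (t i x))\<^sup>2) = 1)"
    show "(\<lambda>x. \<Sum>i<n. cnj (t i x) * f i x * t i x) \<in> S"
    proof (cases n)
      case 0
      then show ?thesis using H by simp
    next
      case (Suc m)
      define w where "w = (\<lambda>i x. (cmod (t i x))\<^sup>2)"
      have "(\<forall>i<Suc m. f i \<in> S) \<and> (\<forall>i<Suc m. continuous_on UNIV (w i)) \<and>
         (\<forall>i<Suc m. \<forall>x. 0 \<le> w i x) \<and> (\<forall>x. (\<Sum>i<Suc m. w i x) = 1)"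
      proof (intro conjI allI impI)
        fix i assume "i < Suc m"
        then have "continuous_on UNIV (t i)" using H Suc unfolding CX_def by auto
        then show "continuous_on UNIV (w i)" unfolding w_def by (intro continuous_intros)
      qed (use H Suc w_def in auto)
      then have "(\<lambda>x. \<Sum>i<Suc m. complex_of_real (w i x) * f i x) \<in> S"
        using weights[OF ps assms(1)] by blast
      then show ?thesis unfolding Suc w_def cnj_mult_sq .
    qed
  qed
qed

end
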